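(* Let $\lambda_1,\lambda_2,\lambda_3,\lambda_4>0$ and $\alpha>0$. For a decomposition $\bm{X}=\sum_{d=1}^{D/P}\bm{W}\times_1\bm{H}_{:d:}\times_2\bm{R}_{:d:}\times_3\bm{T}_{:d:}$ define $$A=\sum_{d=1}^{D/P}\Big[\lambda_1\big(\|\bm{H}_{:d:}\|_F^{\alpha}+\|\bm{R}_{:d:}\|_F^{\alpha}+\|\bm{T}_{:d:}\|_F^{\alpha}\big)+\lambda_4\big(\|\bm{W}\times_2\bm{R}_{:d:}\times_3\bm{T}_{:d:}\|_F^{\alpha}+\|\bm{W}\times_3\bm{T}_{:d:}\times_1\bm{H}_{:d:}\|_F^{\alpha}+\|\bm{W}\times_1\bm{H}_{:d:}\times_2\bm{R}_{:d:}\|_F^{\alpha}\big)\Big],$$ $$B=\sum_{d=1}^{D/P}\Big[\lambda_2\big(\|\bm{T}_{:d:}\|_F^{\alpha}\|\bm{R}_{:d:}\|_F^{\alpha}+\|\bm{T}_{:d:}\|_F^{\alpha}\|\bm{H}_{:d:}\|_F^{\alpha}+\|\bm{R}_{:d:}\|_F^{\alpha}\|\bm{H}_{:d:}\|_F^{\alpha}\big)+\lambda_3\big(\|\bm{W}\times_1\bm{H}_{:d:}\|_F^{\alpha}+\|\bm{W}\times_2\bm{R}_{:d:}\|_F^{\alpha}+\|\bm{W}\times_3\bm{T}_{:d:}\|_F^{\alpha}\big)\Big].$$ Then: (i) for any tensor $\bm{X}\in\mathbb{R}^{n_1\times n_2\times n_3}$ there exists a decomposition of $\bm{X}$ of this form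 for which $A<\frac{\sqrt{\lambda_1\lambda_4}}{\sqrt{\lambda_2\lambda_3}}B$; and (ii) for some tensor $\bm{X}$ there exists a decomposition of $\bm{X}$ of this form for which $A>\frac{\sqrt{\lambda_1\lambda_4}}{\sqrt{\lambda_2\lambda_3}}B$.
   Context: A decomposition of $\bm{X}\in\mathbb{R}^{n_1\times n_2\times n_3}$ consists of positive integers $P,D$ with $P\mid D$, a core $\bm{W}\in\mathbb{R}^{P\times P\times P}$, and arrays $\bm{H}\in\mathbb{R}^{n_1\times (D/P)\times P}$, $\bm{R}\in\mathbb{R}^{n_2\times (D/P)\times P}$, $\bm{T}\in\mathbb{R}^{n_3\times (D/P)\times P}$ with $\bm{X}=\sum_{d=1}^{D/P}\bm{W}\times_1\bm{H}_{:d:}\times_2\bm{R}_{:d:}\times_3\bm{T}_{:d:}$, where $\bm{H}_{:d:}\in\mathbb{R}^{n_1\times P}$ is the slice with middle index $d$ and $(\bm{W}\times_1\bm{A})_{imn}=\sum_l\bm{W}_{lmn}\bm{A}_{il}$ (with $\times_2,\times_3$ analogous). $\|\cdot\|_F$ is the Frobenius norm. *)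

theory Defs
  imports Complex_Main
begin

text \<open>Third-order tensors are functions nat => nat => nat => real, indices 0-based;
  only entries inside the stated index bounds matter.
  The arrays H, R, T of size n x (D/P) x P are functions nat => nat => nat => real,
  and the slice H_{:d:} is (\<lambda>i l. H i d l).\<close>

type_synonym tensor3 = "nat \<Rightarrow> nat \<Rightarrow> nat \<Rightarrow> real"
type_synonym mat = "nat \<Rightarrow> nat \<Rightarrow> real"

definition slice :: "tensor3 \<Rightarrow> nat \<Rightarrow> mat" where
  "slice H d = (\<lambda>i l. H i d l)"

definition mode1 :: "nat \<Rightarrow> tensor3 \<Rightarrow> mat \<Rightarrow> tensor3" where
  "mode1 p W A = (\<lambda>i m n. \<Sum>l<p. W l m n * A i l)"
definition mode2 :: "nat \<Rightarrow> tensor3 \<Rightarrow> mat \<Rightarrow> tensor3" where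
  "mode2 p W A = (\<lambda>l j n. \<Sum>m<p. W l m n * A j m)"
definition mode3 :: "nat \<Rightarrow> tensor3 \<Rightarrow> mat \<Rightarrow> tensor3" where
  "mode3 p W A = (\<lambda>l m k. \<Sum>n<p. W l m n * A k n)"

definition frob2 :: "nat \<Rightarrow> nat \<Rightarrow> mat \<Rightarrow> real" where
  "frob2 a b M = sqrt (\<Sum>i<a. \<Sum>j<b. (M i j)\<^sup>2)"
definition frob3 :: "nat \<Rightarrow> nat \<Rightarrow> nat \<Rightarrow> tensor3 \<Rightarrow> real" where
  "frob3 a b c X = sqrt (\<Sum>i<a. \<Sum>j<b. \<Sum>k<c. (X i j k)\<^sup>2)"

definition is_decomp ::
  "nat \<Rightarrow> nat \<Rightarrow> nat \<Rightarrow> tensor3 \<Rightarrow> nat \<Rightarrow> nat \<Rightarrow> tensor3 \<Rightarrow> tensor3 \<Rightarrow> tensor3 \<Rightarrow> tensor3 \<Rightarrow> bool" where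
  "is_decomp n1 n2 n3 X P D W H R T \<longleftrightarrow>
     0 < P \<and> 0 < D \<and> P dvd D \<and>
     (\<forall>i<n1. \<forall>j<n2. \<forall>k<n3.
        X i j k = (\<Sum>d<D div P.
           mode3 P (mode2 P (mode1 P W (slice H d)) (slice R d)) (slice T d) i j k))"

definition A_val ::
  "real \<Rightarrow> real \<Rightarrow> real \<Rightarrow> nat \<Rightarrow> nat \<Rightarrow> nat \<Rightarrow> nat \<Rightarrow> nat \<Rightarrow> tensor3 \<Rightarrow> tensor3 \<Rightarrow> tensor3 \<Rightarrow> tensor3 \<Rightarrow> real" where
  "A_val l1 l4 \<alpha> n1 n2 n3 P D W H R T =
     (\<Sum>d<D div P.
        l1 * (frob2 n1 P (slice H d) powr \<alpha> + frob2 n2 P (slice R d) powr \<alpha>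
              + frob2 n3 P (slice T d) powr \<alpha>)
      + l4 * (frob3 P n2 n3 (mode3 P (mode2 P W (slice R d)) (slice T d)) powr \<alpha>
              + frob3 n1 P n3 (mode1 P (mode3 P W (slice T d)) (slice H d)) powr \<alpha>
              + frob3 n1 n2 P (mode2 P (mode1 P W (slice H d)) (slice R d)) powr \<alpha>))"

definition B_val ::
  "real \<Rightarrow> real \<Rightarrow> real \<Rightarrow> nat \<Rightarrow> nat \<Rightarrow> nat \<Rightarrow> nat \<Rightarrow> nat \<Rightarrow> tensor3 \<Rightarrow> tensor3 \<Rightarrow> tensor3 \<Rightarrow> tensor3 \<Rightarrow> real" where
  "B_val l2 l3 \<alpha> n1 n2 n3 P D W H R T =
     (\<Sum>d<D div P.
        l2 * (frob2 n3 P (slice T d) powr \<alpha> * frob2 n2 P (slice R d) powr \<alpha>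
              + frob2 n3 P (slice T d) powr \<alpha> * frob2 n1 P (slice H d) powr \<alpha>
              + frob2 n2 P (slice R d) powr \<alpha> * frob2 n1 P (slice H d) powr \<alpha>)
      + l3 * (frob3 n1 P P (mode1 P W (slice H d)) powr \<alpha>
              + frob3 P n2 P (mode2 P W (slice R d)) powr \<alpha>
              + frob3 P P n3 (mode3 P W (slice T d)) powr \<alpha>))"

end

theory Submission
  imports Defs
begin

definition dl :: "nat \<Rightarrow> nat \<Rightarrow> real" where "dl i l = (if i = l then 1 else 0)"

lemma slice_scale[simp]: "slice (\<lambda>i d l. x * H i d l) d = (\<lambda>i l. x * slice H d i l)"
  by (simp add: slice_def)

lemma mode1_scale[simp]: "mode1 p (\<lambda>a b c. x * W a b c) (\<lambda>a b. y * M a b) = (\<lambda>a b c. (x*y) * mode1 p W M a b c)"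
  by (simp add: mode1_def sum_distrib_left mult_ac)
lemma mode2_scale[simp]: "mode2 p (\<lambda>a b c. x * W a b c) (\<lambda>a b. y * M a b) = (\<lambda>a b c. (x*y) * mode2 p W M a b c)"
  by (simp add: mode2_def sum_distrib_left mult_ac)
lemma mode3_scale[simp]: "mode3 p (\<lambda>a b c. x * W a b c) (\<lambda>a b. y * M a b) = (\<lambda>a b c. (x*y) * mode3 p W M a b c)"
  by (simp add: mode3_def sum_distrib_left mult_ac)

lemma frob2_nonneg: "frob2 a b M \<ge> 0"
  by (simp add: frob2_def sum_nonneg)
lemma frob3_nonneg: "frob3 a b c M \<ge> 0"
  by (simp add: frob3_def sum_nonneg)

lemma frob2_scale: "frob2 a b (\<lambda>i j. x * M i j) = \<bar>x\<bar> * frob2 a b M"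
  by (simp add: frob2_def power_mult_distrib sum_distrib_left[symmetric] real_sqrt_mult)
lemma frob3_scale: "frob3 a b c (\<lambda>i j k. x * M i j k) = \<bar>x\<bar> * frob3 a b c M"
  by (simp add: frob3_def power_mult_distrib sum_distrib_left[symmetric] real_sqrt_mult)

lemma frob2_scale_powr[simp]: "frob2 a b (\<lambda>i j. x * M i j) powr e = \<bar>x\<bar> powr e * frob2 a b M powr e"
  by (simp add: frob2_scale powr_mult frob2_nonneg)
lemma frob3_scale_powr[simp]: "frob3 a b c (\<lambda>i j k. x * M i j k) powr e = \<bar>x\<bar> powr e * frob3 a b c M powr e"
  by (simp add: frob3_scale powr_mult frob3_nonneg)

lemma sum_dl: "i < p \<Longrightarrow> (\<Sum>l<p. f l * dl i l) = f i"
  by (simp add: dl_def if_distrib cong: if_cong)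

lemma base_decomp:
  assumes "i < p" "j < p" "k < p"
  shows "mode3 p (mode2 p (mode1 p X dl) dl) dl i j k = X i j k"
  using assms by (simp add: mode1_def mode2_def mode3_def sum_dl)

lemma frob2_dl_pos: "0 < n \<Longrightarrow> n \<le> p \<Longrightarrow> frob2 n p dl > 0"
proof -
  assume a: "0 < n" "n \<le> p"
  have "(\<Sum>j<p. (dl 0 j)\<^sup>2) \<le> (\<Sum>i<n. \<Sum>j<p. (dl i j)\<^sup>2)"
    using a by (intro member_le_sum[of 0 _ "\<lambda>i. \<Sum>j<p. (dl i j)\<^sup>2"]) (auto intro: sum_nonneg)
  moreover have "(dl 0 0)\<^sup>2 \<le> (\<Sum>j<p. (dl 0 j)\<^sup>2)"
    using a by (intro member_le_sum[of 0 _ "\<lambda>j. (dl 0 j)\<^sup>2"]) auto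
  ultimately show ?thesis unfolding frob2_def by (simp add: dl_def)
qed


lemma part1:
  fixes l1 l2 l3 l4 \<alpha> :: real
  assumes l: "l1 > 0" "l2 > 0" "l3 > 0" "l4 > 0" "\<alpha> > 0"
  and n: "0 < n1" "0 < n2" "0 < n3"
  shows "\<exists>P D W H R T. is_decomp n1 n2 n3 X P D W H R T \<and>
               A_val l1 l4 \<alpha> n1 n2 n3 P D W H R T
                 < sqrt (l1 * l4) / sqrt (l2 * l3) * B_val l2 l3 \<alpha> n1 n2 n3 P D W H R T"
proof -
  define P where "P = n1 + n2 + n3"
  have P: "0 < P" "n1 \<le> P" "n2 \<le> P" "n3 \<le> P" using n by (auto simp: P_def)
  define k where "k = sqrt (l1 * l4) / sqrt (l2 * l3)"
  have k: "k > 0" using l by (simp add: k_def)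
  define h0 where "h0 = frob2 n1 P dl powr \<alpha>"
  define r0 where "r0 = frob2 n2 P dl powr \<alpha>"
  define t0 where "t0 = frob2 n3 P dl powr \<alpha>"
  have pos: "h0 > 0" "r0 > 0" "t0 > 0"
    using frob2_dl_pos[OF n(1) P(2)] frob2_dl_pos[OF n(2) P(3)] frob2_dl_pos[OF n(3) P(4)]
    by (simp_all add: h0_def r0_def t0_def)
  define F1 where "F1 = frob3 P n2 n3 (mode3 P (mode2 P X dl) dl) powr \<alpha>"
  define F2 where "F2 = frob3 n1 P n3 (mode1 P (mode3 P X dl) dl) powr \<alpha>"
  define F3 where "F3 = frob3 n1 n2 P (mode2 P (mode1 P X dl) dl) powr \<alpha>"
  define G1 where "G1 = frob3 n1 P P (mode1 P X dl) powr \<alpha>"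
  define G2 where "G2 = frob3 P n2 P (mode2 P X dl) powr \<alpha>"
  define G3 where "G3 = frob3 P P n3 (mode3 P X dl) powr \<alpha>"
  have Fnn: "F1 \<ge> 0" "F2 \<ge> 0" "F3 \<ge> 0" "G1 \<ge> 0" "G2 \<ge> 0" "G3 \<ge> 0"
    by (auto simp: F1_def F2_def F3_def G1_def G2_def G3_def)
  define K where "K = l1 * (h0 + r0 + t0) + l4 * (F1 + F2 + F3)"
  have K: "K \<ge> 0" using l pos Fnn by (simp add: K_def)
  define b1 where "b1 = k * l2 * (t0 * r0)"
  have b1: "b1 > 0" using k l pos by (simp add: b1_def)
  define u where "u = max 1 (K / b1 + 1)"
  have u1: "u \<ge> 1" by (simp add: u_def)
  have u2: "u > K / b1" by (simp add: u_def)
  define t where "t = u powr (1 / \<alpha>)"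
  have t: "t > 0" using u1 by (simp add: t_def)
  have tu: "t powr \<alpha> = u" using u1 l(5) by (simp add: t_def powr_powr)
  define c where "c = 1 / (t * t * t)"
  have c1: "\<bar>c * t * t\<bar> = 1 / t" and c2: "\<bar>c * t\<bar> = 1 / (t * t)" and c3: "c * t * t * t = 1"
    using t by (auto simp: c_def field_simps)
  have p1: "(1 / t) powr \<alpha> = 1 / u" using t tu by (simp add: powr_divide)
  have p2: "(1 / (t * t)) powr \<alpha> = 1 / (u * u)" using t tu by (simp add: powr_divide powr_mult)
  have p3: "\<bar>t\<bar> powr \<alpha> = u" using t tu by simp
  define W where "W = (\<lambda>a b d. c * X a b d)"
  define H where "H = (\<lambda>i (d::nat) l. t * dl i l)"
  have sl: "slice H d = (\<lambda>i l. t * dl i l)" for d by (simp add: H_def slice_def)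
  have dec: "is_decomp n1 n2 n3 X P P W H H H"
    unfolding is_decomp_def using P
    by (simp add: sl W_def c3 base_decomp)
  have Aeq: "A_val l1 l4 \<alpha> n1 n2 n3 P P W H H H = l1 * (u * (h0 + r0 + t0)) + l4 * ((1/u) * (F1 + F2 + F3))"
    unfolding A_val_def using P
    apply (simp add: sl W_def c1 c2 p1 p2 p3 h0_def r0_def t0_def F1_def F2_def F3_def)
    by (simp add: algebra_simps add_divide_distrib)
  have Beq: "B_val l2 l3 \<alpha> n1 n2 n3 P P W H H H = l2 * (u * u * (t0 * r0 + t0 * h0 + r0 * h0)) + l3 * ((1/(u*u)) * (G1 + G2 + G3))"
    unfolding B_val_def using P
    apply (simp add: sl W_def c1 c2 p1 p2 p3 h0_def r0_def t0_def G1_def G2_def G3_def)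
    by (simp add: algebra_simps add_divide_distrib)
  have "A_val l1 l4 \<alpha> n1 n2 n3 P P W H H H < k * B_val l2 l3 \<alpha> n1 n2 n3 P P W H H H"
  proof -
    have s2: "(1/u) * (F1 + F2 + F3) \<le> u * (F1 + F2 + F3)"
      using u1 Fnn by (intro mult_right_mono) (auto simp: field_simps intro: one_le_mult_iff[THEN iffD2] order_trans[OF u1] mult_left_mono[of 1 u u, simplified])
    have "A_val l1 l4 \<alpha> n1 n2 n3 P P W H H H \<le> u * K"
      unfolding Aeq K_def using s2 l(4) mult_left_mono[OF s2, of l4] by (simp add: algebra_simps)
    also have "u * K < u * (u * b1)"
      using u1 u2 b1 by (intro mult_strict_left_mono) (auto simp: field_simps)
    also have "u * (u * b1) \<le> k * B_val l2 l3 \<alpha> n1 n2 n3 P P W H H H"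
    proof -
      have e: "0 \<le> l2 * (u * u * (t0 * h0 + r0 * h0)) + l3 * ((1/(u*u)) * (G1 + G2 + G3))"
        using l pos Fnn u1 by (intro add_nonneg_nonneg mult_nonneg_nonneg) auto
      have "k * B_val l2 l3 \<alpha> n1 n2 n3 P P W H H H = u * (u * b1) + k * (l2 * (u * u * (t0 * h0 + r0 * h0)) + l3 * ((1/(u*u)) * (G1 + G2 + G3)))"
        unfolding Beq b1_def by (simp add: algebra_simps)
      then show ?thesis using e k by simp
    qed
    finally show ?thesis .
  qed
  then show ?thesis using dec unfolding k_def by blast
qed


theorem proposition4:
  fixes l1 l2 l3 l4 \<alpha> :: real
  assumes "l1 > 0" "l2 > 0" "l3 > 0" "l4 > 0" "\<alpha> > 0"
  shows "(\<forall>(n1::nat) (n2::nat) (n3::nat) (X::tensor3). 0 < n1 \<longrightarrow> 0 < n2 \<longrightarrow> 0 < n3 \<longrightarrow>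
            (\<exists>P D W H R T. is_decomp n1 n2 n3 X P D W H R T \<and>
               A_val l1 l4 \<alpha> n1 n2 n3 P D W H R T
                 < sqrt (l1 * l4) / sqrt (l2 * l3) * B_val l2 l3 \<alpha> n1 n2 n3 P D W H R T))
       \<and> (\<exists>(n1::nat) (n2::nat) (n3::nat) (X::tensor3). 0 < n1 \<and> 0 < n2 \<and> 0 < n3 \<and>
            (\<exists>P D W H R T. is_decomp n1 n2 n3 X P D W H R T \<and>
               A_val l1 l4 \<alpha> n1 n2 n3 P D W H R T
                 > sqrt (l1 * l4) / sqrt (l2 * l3) * B_val l2 l3 \<alpha> n1 n2 n3 P D W H R T))"
proof
  show "\<forall>(n1::nat) (n2::nat) (n3::nat) (X::tensor3). 0 < n1 \<longrightarrow> 0 < n2 \<longrightarrow> 0 < n3 \<longrightarrow>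
            (\<exists>P D W H R T. is_decomp n1 n2 n3 X P D W H R T \<and>
               A_val l1 l4 \<alpha> n1 n2 n3 P D W H R T
                 < sqrt (l1 * l4) / sqrt (l2 * l3) * B_val l2 l3 \<alpha> n1 n2 n3 P D W H R T)"
    using part1[OF assms] by blast
next
  let ?Z = "(\<lambda>_ _ _. 0) :: tensor3"
  let ?O = "(\<lambda>_ _ _. 1) :: tensor3"
  have d: "is_decomp 1 1 1 ?Z 1 1 ?Z ?O ?Z ?Z"
    by (simp add: is_decomp_def mode1_def mode2_def mode3_def slice_def)
  have a: "A_val l1 l4 \<alpha> 1 1 1 1 1 ?Z ?O ?Z ?Z = l1"
    using assms by (simp add: A_val_def mode1_def mode2_def mode3_def slice_def frob2_def frob3_def)
  have b: "B_val l2 l3 \<alpha> 1 1 1 1 1 ?Z ?O ?Z ?Z = 0"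
    using assms by (simp add: B_val_def mode1_def mode2_def mode3_def slice_def frob2_def frob3_def)
  show "\<exists>(n1::nat) (n2::nat) (n3::nat) (X::tensor3). 0 < n1 \<and> 0 < n2 \<and> 0 < n3 \<and>
            (\<exists>P D W H R T. is_decomp n1 n2 n3 X P D W H R T \<and>
               A_val l1 l4 \<alpha> n1 n2 n3 P D W H R T
                 > sqrt (l1 * l4) / sqrt (l2 * l3) * B_val l2 l3 \<alpha> n1 n2 n3 P D W H R T)"
      proof (intro exI conjI)
    show "is_decomp 1 1 1 ?Z 1 1 ?Z ?O ?Z ?Z" by (rule d)
    show "A_val l1 l4 \<alpha> 1 1 1 1 1 ?Z ?O ?Z ?Z > sqrt (l1 * l4) / sqrt (l2 * l3) * B_val l2 l3 \<alpha> 1 1 1 1 1 ?Z ?O ?Z ?Z"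
      using a b assms(1) by simp
  qed auto
qed

end
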